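(* Let $\Gamma$ be a second countable locally compact abelian group, $n\ge2$, $\omega\in\Gamma^n$. An $\omega$-invariant subset $X$ of $\Gamma$ is good if and only if every $\gamma\in X$ satisfies one of: (i) there exists $i\in\{1,\ldots,n\}$ such that $\gamma-m\omega_i\in X$ and $\gamma-m\omega_i\ne\gamma$ for every positive integer $m$; (ii) there exist $i\ne j$ in $\{1,\ldots,n\}$ such that $\gamma-m\omega_i-\omega_j\in X$ for every positive integer $m$.
   Context: A closed $X\subset\Gamma$ is $\omega$-invariant if $X+\omega_i\subset X$ for all $i$ and every $\gamma\in X$ has some $i$ with $\gamma-\omega_i\in X$. An $\omega$-invariant $X$ is bad if there is $\gamma\in X$ such that there is exactly one $i\in\{1,\ldots,n\}$ with $\gamma-\omega_i\in X$ and this $i$ satisfies $m\omega_i=0$ for some positive integer $m$; $X$ is good if it is not bad. *)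

theory Defs
  imports "HOL-Analysis.Analysis"
begin

primrec nmul :: "nat \<Rightarrow> 'a::ab_group_add \<Rightarrow> 'a" where
  "nmul 0 x = 0"
| "nmul (Suc m) x = x + nmul m x"

definition omega_invariant :: "nat \<Rightarrow> (nat \<Rightarrow> 'a::{topological_ab_group_add}) \<Rightarrow> 'a set \<Rightarrow> bool" where
  "omega_invariant n \<omega> X \<longleftrightarrow> closed X
     \<and> (\<forall>i\<in>{1..n}. (\<lambda>x. x + \<omega> i) ` X \<subseteq> X)
     \<and> (\<forall>\<gamma>\<in>X. \<exists>i\<in>{1..n}. \<gamma> - \<omega> i \<in> X)"

definition omega_bad :: "nat \<Rightarrow> (nat \<Rightarrow> 'a::{topological_ab_group_add}) \<Rightarrow> 'a set \<Rightarrow> bool" where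
  "omega_bad n \<omega> X \<longleftrightarrow> omega_invariant n \<omega> X \<and>
     (\<exists>\<gamma>\<in>X. \<exists>i\<in>{1..n}. (\<forall>j\<in>{1..n}. \<gamma> - \<omega> j \<in> X \<longleftrightarrow> j = i)
        \<and> (\<exists>m::nat. m > 0 \<and> nmul m (\<omega> i) = 0))"

definition omega_good :: "nat \<Rightarrow> (nat \<Rightarrow> 'a::{topological_ab_group_add}) \<Rightarrow> 'a set \<Rightarrow> bool" where
  "omega_good n \<omega> X \<longleftrightarrow> omega_invariant n \<omega> X \<and> \<not> omega_bad n \<omega> X"

end

theory Submission
  imports Defs
begin

lemma nmul_add: "nmul (a + b) x = nmul a x + nmul b x"
  by (induction a) (simp_all add: add.assoc)

lemma nmul_one[simp]: "nmul 1 x = x"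
  by simp

lemma nmul_zero[simp]: "nmul m (0::'a::ab_group_add) = 0"
  by (induction m) simp_all

lemma nmul_mult: "nmul (a * b) x = nmul b (nmul a x)"
  by (induction b) (simp_all add: nmul_add)

lemma inv_add:
  assumes "omega_invariant n \<omega> X" "\<delta> \<in> X" "i \<in> {1..n}"
  shows "\<delta> + nmul m (\<omega> i) \<in> X"
proof (induction m)
  case 0 then show ?case using assms by simp
next
  case (Suc m)
  have "\<delta> + nmul m (\<omega> i) + \<omega> i \<in> X"
    using assms Suc unfolding omega_invariant_def by blast
  then show ?case by (simp add: algebra_simps)
qed

lemma inv_sum:
  assumes "omega_invariant n \<omega> X" "finite S" "S \<subseteq> {1..n}"
  shows "\<delta> \<in> X \<Longrightarrow> \<delta> + (\<Sum>k\<in>S. nmul (c k) (\<omega> k)) \<in> X"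
  using assms(2,3)
proof (induction S arbitrary: \<delta> rule: finite_induct)
  case empty then show ?case by simp
next
  case (insert a F)
  have "\<delta> + nmul (c a) (\<omega> a) \<in> X" using inv_add[OF assms(1) insert(4)] insert(5) by blast
  then have "\<delta> + nmul (c a) (\<omega> a) + (\<Sum>k\<in>F. nmul (c k) (\<omega> k)) \<in> X"
    using insert by blast
  then show ?case using insert by (simp add: algebra_simps)
qed

lemma chain:
  assumes inv: "omega_invariant n \<omega> X" and g: "\<gamma> \<in> X"
  shows "\<exists>c. (\<Sum>i\<in>{1..n}. c i) = L \<and> \<gamma> - (\<Sum>i\<in>{1..n}. nmul (c i) (\<omega> i)) \<in> X"
proof (induction L)
  case 0
  show ?case by (rule exI[of _ "\<lambda>_. 0"]) (simp add: g)
next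
  case (Suc L)
  then obtain c where c: "(\<Sum>i\<in>{1..n}. c i) = L" "\<gamma> - (\<Sum>i\<in>{1..n}. nmul (c i) (\<omega> i)) \<in> X"
    by blast
  then obtain j where j: "j \<in> {1..n}" "\<gamma> - (\<Sum>i\<in>{1..n}. nmul (c i) (\<omega> i)) - \<omega> j \<in> X"
    using inv unfolding omega_invariant_def by blast
  define c' where "c' = c(j := Suc (c j))"
  have s1: "(\<Sum>i\<in>{1..n}. c' i) = c' j + (\<Sum>i\<in>{1..n}-{j}. c' i)"
    using j(1) by (simp add: sum.remove)
  have s2: "(\<Sum>i\<in>{1..n}. c i) = c j + (\<Sum>i\<in>{1..n}-{j}. c i)"
    using j(1) by (simp add: sum.remove)
  have s3: "(\<Sum>i\<in>{1..n}-{j}. c' i) = (\<Sum>i\<in>{1..n}-{j}. c i)"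
    by (rule sum.cong) (auto simp: c'_def)
  have t1: "(\<Sum>i\<in>{1..n}. nmul (c' i) (\<omega> i)) = nmul (c' j) (\<omega> j) + (\<Sum>i\<in>{1..n}-{j}. nmul (c' i) (\<omega> i))"
    using j(1) by (simp add: sum.remove)
  have t2: "(\<Sum>i\<in>{1..n}. nmul (c i) (\<omega> i)) = nmul (c j) (\<omega> j) + (\<Sum>i\<in>{1..n}-{j}. nmul (c i) (\<omega> i))"
    using j(1) by (simp add: sum.remove)
  have t3: "(\<Sum>i\<in>{1..n}-{j}. nmul (c' i) (\<omega> i)) = (\<Sum>i\<in>{1..n}-{j}. nmul (c i) (\<omega> i))"
    by (rule sum.cong) (auto simp: c'_def)
  show ?case
  proof (intro exI conjI)
    show "(\<Sum>i\<in>{1..n}. c' i) = Suc L" using s1 s2 s3 c(1) by (simp add: c'_def)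
    show "\<gamma> - (\<Sum>i\<in>{1..n}. nmul (c' i) (\<omega> i)) \<in> X"
      using j(2) t1 t2 t3 by (simp add: c'_def algebra_simps)
  qed
qed

lemma ray:
  assumes inv: "omega_invariant n \<omega> X" and g: "\<gamma> \<in> X" and n: "n \<ge> 1"
  shows "\<exists>i\<in>{1..n}. \<forall>m. \<gamma> - nmul m (\<omega> i) \<in> X"
proof (rule ccontr)
  assume "\<not> ?thesis"
  then have "\<forall>i\<in>{1..n}. \<exists>m. \<gamma> - nmul m (\<omega> i) \<notin> X" by blast
  then obtain f where f: "\<And>i. i \<in> {1..n} \<Longrightarrow> \<gamma> - nmul (f i) (\<omega> i) \<notin> X"
    by metis
  obtain c where c: "(\<Sum>i\<in>{1..n}. c i) = (\<Sum>i\<in>{1..n}. f i)"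
    "\<gamma> - (\<Sum>i\<in>{1..n}. nmul (c i) (\<omega> i)) \<in> X"
    using chain[OF inv g] by blast
  have "\<exists>i\<in>{1..n}. f i \<le> c i"
  proof (rule ccontr)
    assume "\<not> ?thesis"
    then have "(\<Sum>i\<in>{1..n}. c i) < (\<Sum>i\<in>{1..n}. f i)"
      using n by (intro sum_strict_mono) (auto simp: not_le)
    then show False using c(1) by simp
  qed
  then obtain i where i: "i \<in> {1..n}" "f i \<le> c i" by blast
  have fin: "finite ({1..n} - {i})" by simp
  have e1: "(\<Sum>k\<in>{1..n}. nmul (c k) (\<omega> k)) = nmul (c i) (\<omega> i) + (\<Sum>k\<in>{1..n}-{i}. nmul (c k) (\<omega> k))"
    using i(1) by (simp add: sum.remove)
  have e2: "nmul (c i) (\<omega> i) = nmul (f i) (\<omega> i) + nmul (c i - f i) (\<omega> i)"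
    using i(2) by (metis le_add_diff_inverse nmul_add)
  have "\<gamma> - (\<Sum>k\<in>{1..n}. nmul (c k) (\<omega> k)) + nmul (c i - f i) (\<omega> i) \<in> X"
    using inv_add[OF inv c(2) i(1)] .
  then have "\<gamma> - (\<Sum>k\<in>{1..n}. nmul (c k) (\<omega> k)) + nmul (c i - f i) (\<omega> i)
     + (\<Sum>k\<in>{1..n}-{i}. nmul (c k) (\<omega> k)) \<in> X"
    using inv_sum[OF inv fin, of _ c] by blast
  then have "\<gamma> - nmul (f i) (\<omega> i) \<in> X"
    using e1 e2 by (simp add: algebra_simps)
  then show False using f i(1) by blast
qed

theorem lemma4p3:
  fixes \<omega> :: "nat \<Rightarrow> 'a::{topological_ab_group_add, t2_space, second_countable_topology}"
    and X :: "'a set" and n :: nat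
  assumes "locally_compact_space (euclidean :: 'a topology)"
    and "n \<ge> 2"
    and "omega_invariant n \<omega> X"
  shows "omega_good n \<omega> X \<longleftrightarrow>
    (\<forall>\<gamma>\<in>X.
       (\<exists>i\<in>{1..n}. \<forall>m::nat. m > 0 \<longrightarrow>
            \<gamma> - nmul m (\<omega> i) \<in> X \<and> \<gamma> - nmul m (\<omega> i) \<noteq> \<gamma>)
     \<or> (\<exists>i\<in>{1..n}. \<exists>j\<in>{1..n}. i \<noteq> j \<and> (\<forall>m::nat. m > 0 \<longrightarrow>
            \<gamma> - nmul m (\<omega> i) - \<omega> j \<in> X)))"
  (is "_ \<longleftrightarrow> (\<forall>\<gamma>\<in>X. ?A \<gamma> \<or> ?B \<gamma>)")
proof
  note inv = assms(3)
  have plus: "\<And>\<delta> i. \<delta> \<in> X \<Longrightarrow> i \<in> {1..n} \<Longrightarrow> \<delta> + \<omega> i \<in> X"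
    using inv unfolding omega_invariant_def by blast
  assume good: "omega_good n \<omega> X"
  show "\<forall>\<gamma>\<in>X. ?A \<gamma> \<or> ?B \<gamma>" (is "\<forall>\<gamma>\<in>X. ?P \<gamma>")
  proof
    fix \<gamma> assume g: "\<gamma> \<in> X"
    show "?P \<gamma>"
    proof (cases "\<exists>i\<in>{1..n}. (\<exists>r::nat. r > 0 \<and> nmul r (\<omega> i) = 0) \<and> (\<exists>k\<in>{1..n}. k \<noteq> i \<and> \<gamma> - \<omega> k \<in> X)")
      case True
      then obtain i r k where i: "i \<in> {1..n}" "r > 0" "nmul r (\<omega> i) = 0" "k \<in> {1..n}" "k \<noteq> i" "\<gamma> - \<omega> k \<in> X"
        by blast
      have hm: "\<gamma> - nmul m (\<omega> i) - \<omega> k \<in> X" for m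
      proof -
        have z: "nmul (r * m) (\<omega> i) = 0" using i(3) by (simp add: nmul_mult)
        have eq: "(r * m - m) + m = r * m" using i(2) by simp
        have "nmul (r * m - m) (\<omega> i) + nmul m (\<omega> i) = 0"
          using nmul_add[of "r * m - m" m "\<omega> i", unfolded eq z] by simp
        then have "nmul (r * m - m) (\<omega> i) = - nmul m (\<omega> i)"
          by (simp add: eq_neg_iff_add_eq_0)
        moreover have "\<gamma> - \<omega> k + nmul (r * m - m) (\<omega> i) \<in> X"
          using inv_add[OF inv i(6) i(1)] .
        ultimately show ?thesis by (simp add: algebra_simps)
      qed
      have "?B \<gamma>"
        apply (rule bexI[where x=i], rule bexI[where x=k])
        using hm i by auto
      then show ?thesis by (rule disjI2)
    next
      case False
      have nt: "\<forall>i\<in>{1..n}. \<forall>r::nat. r > 0 \<longrightarrow> nmul r (\<omega> i) \<noteq> 0"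
      proof (rule ccontr)
        assume "\<not> ?thesis"
        then obtain i r where i: "i \<in> {1..n}" "r > 0" "nmul r (\<omega> i) = 0" by blast
        with False have P: "\<forall>k\<in>{1..n}. \<gamma> - \<omega> k \<in> X \<longrightarrow> k = i" by blast
        obtain j where "j \<in> {1..n}" "\<gamma> - \<omega> j \<in> X" using inv g unfolding omega_invariant_def by blast
        with P have "\<forall>k\<in>{1..n}. \<gamma> - \<omega> k \<in> X \<longleftrightarrow> k = i" by blast
        then have "omega_bad n \<omega> X" using inv g i unfolding omega_bad_def by blast
        then show False using good unfolding omega_good_def by blast
      qed
      obtain i where i: "i \<in> {1..n}" "\<forall>m. \<gamma> - nmul m (\<omega> i) \<in> X"
        using ray[OF inv g] assms(2) by auto
      have "?A \<gamma>"
      proof (rule bexI[OF _ i(1)], intro allI impI conjI)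
        fix m :: nat assume "m > 0"
        show "\<gamma> - nmul m (\<omega> i) \<in> X" using i(2) by blast
        have "nmul m (\<omega> i) \<noteq> 0" using nt i(1) \<open>m > 0\<close> by blast
        then show "\<gamma> - nmul m (\<omega> i) \<noteq> \<gamma>" by simp
      qed
      then show ?thesis by blast
    qed
  qed
next
  note inv = assms(3)
  have plus: "\<And>\<delta> i. \<delta> \<in> X \<Longrightarrow> i \<in> {1..n} \<Longrightarrow> \<delta> + \<omega> i \<in> X"
    using inv unfolding omega_invariant_def by blast
  assume H: "\<forall>\<gamma>\<in>X. ?A \<gamma> \<or> ?B \<gamma>"
  show "omega_good n \<omega> X"
    unfolding omega_good_def
  proof (intro conjI notI)
    show "omega_invariant n \<omega> X" by (rule inv)
    assume "omega_bad n \<omega> X"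
    then obtain \<gamma> i r where g: "\<gamma> \<in> X" "i \<in> {1..n}"
      "\<forall>j\<in>{1..n}. \<gamma> - \<omega> j \<in> X \<longleftrightarrow> j = i" "r > 0" "nmul r (\<omega> i) = 0"
      unfolding omega_bad_def by (elim conjE bexE exE) blast
    from H g(1) have "?A \<gamma> \<or> ?B \<gamma>" by (rule bspec)
    then show False
    proof
      assume "?A \<gamma>"
      then obtain k where k: "k \<in> {1..n}" "\<forall>m::nat. m > 0 \<longrightarrow> \<gamma> - nmul m (\<omega> k) \<in> X \<and> \<gamma> - nmul m (\<omega> k) \<noteq> \<gamma>"
        by blast
      from k(2)[rule_format, of 1] have "\<gamma> - \<omega> k \<in> X" by simp
      have "\<gamma> - \<omega> k \<in> X \<longleftrightarrow> k = i" using g(3) k(1) by (rule bspec)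
      with \<open>\<gamma> - \<omega> k \<in> X\<close> have "k = i" by simp
      with k(2)[rule_format, of r] g(4,5) show False by simp
    next
      assume "?B \<gamma>"
      then obtain k j where kj: "k \<in> {1..n}" "j \<in> {1..n}" "k \<noteq> j"
        "\<forall>m::nat. m > 0 \<longrightarrow> \<gamma> - nmul m (\<omega> k) - \<omega> j \<in> X" by blast
      from kj(4)[rule_format, of 1] have a: "\<gamma> - \<omega> k - \<omega> j \<in> X" by simp
      have "\<gamma> - \<omega> k - \<omega> j + \<omega> k \<in> X" using plus[OF a kj(1)] .
      then have "\<gamma> - \<omega> j \<in> X" by (simp add: algebra_simps)
      have "\<gamma> - \<omega> k - \<omega> j + \<omega> j \<in> X" using plus[OF a kj(2)] .
      then have "\<gamma> - \<omega> k \<in> X" by (simp add: algebra_simps)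
      have "\<gamma> - \<omega> k \<in> X \<longleftrightarrow> k = i" using g(3) kj(1) by (rule bspec)
      moreover have "\<gamma> - \<omega> j \<in> X \<longleftrightarrow> j = i" using g(3) kj(2) by (rule bspec)
      ultimately show False using kj(3) \<open>\<gamma> - \<omega> j \<in> X\<close> \<open>\<gamma> - \<omega> k \<in> X\<close> by simp
    qed
  qed
qed

end
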